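(* With $\alpha_f(\sigma):=\sup_{\omega\in\mathbb{R}} f(\sigma+j\omega)$ for $\sigma>\alpha_0$, one has $\lim_{\sigma\to\alpha_0^+}\alpha_f(\sigma)=+\infty$ and $\lim_{\sigma\to+\infty}\alpha_f(\sigma)=0$.
   Context: Fix integers $n\ge 1$, $m\ge 0$, matrices $A_0,\dots,A_m\in\mathbb{C}^{n\times n}$, delays $\tau_0=0$ and $\tau_1,\dots,\tau_m\ge 0$, and weights $w_0,\dots,w_m>0$. Define the matrix function $F(\lambda)=\lambda I_n-\sum_{i=0}^m A_i e^{-\lambda\tau_i}$ for $\lambda\in\mathbb{C}$. The characteristic roots are the solutions of $\det F(\lambda)=0$; this set is nonempty, and every right half-plane $\{\Re\lambda\ge c\}$ contains only finitely many of them, so the spectral abscissa $\alpha_0=\sup\{\Re\lambda:\det F(\lambda)=0\}$ is a finite real number attained by some root. Define $w(\lambda)=\sum_{i=0}^m |e^{-\lambda\tau_i}|/w_i$ and, for $\lambda$ not a characteristic root, $f(\lambda)=w(\lambda)\,\sigma_{\max}(F(\lambda)^{-1})$, where $\sigma_{\max}$ denotes the largest singular value. *)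

theory Defs
  imports "HOL-Analysis.Analysis"
begin

text \<open>Characteristic matrix F(lambda) = lambda I - sum_{i=0}^m A_i exp(-lambda tau_i).
  Matrices are complex^'n^'n, the dimension n = CARD('n) is arbitrary (n >= 1 automatically).\<close>
definition charF :: "nat \<Rightarrow> (nat \<Rightarrow> complex^'n^'n) \<Rightarrow> (nat \<Rightarrow> real) \<Rightarrow> complex \<Rightarrow> complex^'n^'n" where
  "charF m A tau lam =
     mat lam - (\<Sum>k\<in>{..m}. (\<chi> i j. exp (- lam * complex_of_real (tau k)) * A k $ i $ j))"

text \<open>Largest singular value = operator norm induced by the Euclidean norm.\<close>
definition sigma_max :: "complex^'n^'n \<Rightarrow> real" where
  "sigma_max M = onorm (\<lambda>x. M *v x)"

definition weightfun :: "nat \<Rightarrow> (nat \<Rightarrow> real) \<Rightarrow> (nat \<Rightarrow> real) \<Rightarrow> complex \<Rightarrow> real" where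
  "weightfun m tau wt lam = (\<Sum>k\<in>{..m}. cmod (exp (- lam * complex_of_real (tau k))) / wt k)"

definition ffun :: "nat \<Rightarrow> (nat \<Rightarrow> complex^'n^'n) \<Rightarrow> (nat \<Rightarrow> real) \<Rightarrow> (nat \<Rightarrow> real) \<Rightarrow> complex \<Rightarrow> real" where
  "ffun m A tau wt lam = weightfun m tau wt lam * sigma_max (matrix_inv (charF m A tau lam))"

definition spectral_abscissa :: "nat \<Rightarrow> (nat \<Rightarrow> complex^'n^'n) \<Rightarrow> (nat \<Rightarrow> real) \<Rightarrow> real" where
  "spectral_abscissa m A tau = Sup (Re ` {lam. det (charF m A tau lam) = 0})"

definition alpha_f :: "nat \<Rightarrow> (nat \<Rightarrow> complex^'n^'n) \<Rightarrow> (nat \<Rightarrow> real) \<Rightarrow> (nat \<Rightarrow> real) \<Rightarrow> real \<Rightarrow> ereal" where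
  "alpha_f m A tau wt \<sigma> = (SUP \<omega>::real. ereal (ffun m A tau wt (Complex \<sigma> \<omega>)))"

end

theory Submission
  imports Defs "HOL-Complex_Analysis.Complex_Analysis"
begin


definition l1 :: "complex^'n^'n \<Rightarrow> real" where
  "l1 M = (\<Sum>i\<in>UNIV. \<Sum>j\<in>UNIV. cmod (M$i$j))"

lemma l1_nonneg: "l1 M \<ge> 0"
  unfolding l1_def by (intro sum_nonneg) auto

lemma entry_le_l1: "cmod (M$i$j) \<le> l1 M"
proof -
  have "cmod (M$i$j) \<le> (\<Sum>j\<in>UNIV. cmod (M$i$j))"
    by (rule member_le_sum) auto
  also have "\<dots> \<le> l1 M" unfolding l1_def
    by (rule member_le_sum[where f="\<lambda>i. \<Sum>j\<in>UNIV. cmod (M$i$j)"]) (auto intro: sum_nonneg)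
  finally show ?thesis .
qed

lemma norm_vec_le_sum: "norm (x::complex^'n) \<le> (\<Sum>i\<in>UNIV. cmod (x$i))"
  unfolding norm_vec_def by (rule L2_set_le_sum) auto

lemma mv_bound: "norm ((M::complex^'n^'n) *v x) \<le> l1 M * norm x"
proof -
  have "norm (M *v x) \<le> (\<Sum>i\<in>UNIV. cmod ((M *v x)$i))" by (rule norm_vec_le_sum)
  also have "\<dots> \<le> (\<Sum>i\<in>UNIV. \<Sum>j\<in>UNIV. cmod (M$i$j) * norm x)"
  proof (intro sum_mono)
    fix i
    have "cmod ((M *v x)$i) = cmod (\<Sum>j\<in>UNIV. M$i$j * x$j)"
      by (simp add: matrix_vector_mult_def)
    also have "\<dots> \<le> (\<Sum>j\<in>UNIV. cmod (M$i$j * x$j))" by (rule norm_sum)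
    also have "\<dots> \<le> (\<Sum>j\<in>UNIV. cmod (M$i$j) * norm x)"
      by (intro sum_mono) (auto simp: norm_mult intro!: mult_left_mono Finite_Cartesian_Product.norm_nth_le)
    finally show "cmod ((M *v x)$i) \<le> (\<Sum>j\<in>UNIV. cmod (M$i$j) * norm x)" .
  qed
  also have "\<dots> = l1 M * norm x" by (simp add: l1_def sum_distrib_right)
  finally show ?thesis .
qed

lemma charF_entry: "charF m A tau z $ i $ j = (if i = j then z else 0) - (\<Sum>k\<le>m. exp (- z * complex_of_real (tau k)) * A k $ i $ j)"
  by (simp add: charF_def mat_def)

lemma charF_mv: "charF m A tau z *v x = z *s x - (\<Sum>k\<le>m. exp (- z * complex_of_real (tau k)) *s (A k *v x))"
  by (simp add: vec_eq_iff charF_entry matrix_vector_mult_def sum_subtractf left_diff_distrib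
      sum_distrib_left sum_distrib_right if_distrib[of "\<lambda>u. u * _"] mult.assoc cong: if_cong)
     (subst sum.swap, simp)

lemma sigma_max_nonneg: "sigma_max (M::complex^'n^'n) \<ge> 0"
  unfolding sigma_max_def by (rule onorm_pos_le) simp

lemma sigma_max_le: "norm ((M::complex^'n^'n) *v x) \<le> sigma_max M * norm x"
  unfolding sigma_max_def by (rule onorm) simp

lemma norm_smult_vec: "norm ((c::complex) *s (v::complex^'n)) = cmod c * norm v"
  unfolding norm_vec_def by (simp add: norm_mult L2_set_right_distrib)

lemma Bsum_bound: "norm (\<Sum>k\<le>m. (c k::complex) *s ((A k::complex^'n^'n) *v x)) \<le> (\<Sum>k\<le>m. cmod (c k) * l1 (A k)) * norm x"
proof -
  have "norm (\<Sum>k\<le>m. c k *s (A k *v x)) \<le> (\<Sum>k\<le>m. norm (c k *s (A k *v x)))" by (rule norm_sum)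
  also have "\<dots> \<le> (\<Sum>k\<le>m. cmod (c k) * l1 (A k) * norm x)"
    by (intro sum_mono) (simp add: norm_smult_vec mult.assoc mult_left_mono mv_bound)
  finally show ?thesis by (simp add: sum_distrib_right)
qed

definition Ssum :: "nat \<Rightarrow> (nat \<Rightarrow> complex^'n^'n) \<Rightarrow> real" where
  "Ssum m A = (\<Sum>k\<le>m. l1 (A k))"

lemma Ssum_nonneg: "Ssum m A \<ge> 0"
  unfolding Ssum_def by (intro sum_nonneg l1_nonneg)

lemma B_bound:
  assumes "\<forall>i\<le>m. tau i \<ge> 0" "Re z \<ge> 0"
  shows "norm (\<Sum>k\<le>m. exp (- z * complex_of_real (tau k)) *s (A k *v x)) \<le> Ssum m A * norm x"
proof -
  have "norm (\<Sum>k\<le>m. exp (- z * complex_of_real (tau k)) *s (A k *v x))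
     \<le> (\<Sum>k\<le>m. cmod (exp (- z * complex_of_real (tau k))) * l1 (A k)) * norm x" by (rule Bsum_bound)
  also have "\<dots> \<le> Ssum m A * norm x"
    unfolding Ssum_def
  proof (intro mult_right_mono sum_mono)
    fix k assume "k \<in> {..m}"
    then have "tau k \<ge> 0" using assms by auto
    then have "cmod (exp (- z * complex_of_real (tau k))) \<le> 1"
      using assms(2) by (simp add: mult_nonneg_nonneg)
    then show "cmod (exp (- z * complex_of_real (tau k))) * l1 (A k) \<le> l1 (A k)"
      using l1_nonneg[of "A k"] by (simp add: mult_left_le_one_le)
  qed simp
  finally show ?thesis .
qed

lemma charF_lower:
  assumes "\<forall>i\<le>m. tau i \<ge> 0" "Re z \<ge> 0"
  shows "norm (charF m A tau z *v x) \<ge> (cmod z - Ssum m A) * norm x"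
proof -
  have "cmod z * norm x = norm (z *s x)" by (simp add: norm_smult_vec)
  also have "\<dots> \<le> norm (charF m A tau z *v x) + norm (\<Sum>k\<le>m. exp (- z * complex_of_real (tau k)) *s (A k *v x))"
    unfolding charF_mv using norm_triangle_ineq2[of "z *s x" "(\<Sum>k\<le>m. exp (- z * complex_of_real (tau k)) *s (A k *v x))"] by linarith
  finally show ?thesis using B_bound[OF assms, of A x] by (simp add: left_diff_distrib)
qed

lemma det0_ker:
  fixes M :: "complex^'n^'n"
  assumes "det M = 0" obtains v where "v \<noteq> 0" "M *v v = 0"
proof -
  have "\<not> invertible M" using assms invertible_det_nz by blast
  then have "\<not> (\<forall>x. M *v x = 0 \<longrightarrow> x = 0)"
    using invertible_left_inverse matrix_left_invertible_ker by blast
  then show ?thesis using that by blast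
qed

lemma root_bound:
  assumes "\<forall>i\<le>m. tau i \<ge> 0" "det (charF m A tau z) = 0"
  shows "Re z \<le> Ssum m A"
proof (rule ccontr)
  assume "\<not> ?thesis"
  then have z: "Re z > Ssum m A" by simp
  then have "Re z \<ge> 0" using Ssum_nonneg[of m A] by linarith
  obtain v where v: "v \<noteq> 0" "charF m A tau z *v v = 0" using det0_ker assms(2) by blast
  have "(cmod z - Ssum m A) * norm v \<le> 0" using charF_lower[OF assms(1) \<open>Re z \<ge> 0\<close>, of A v] v by simp
  moreover have "cmod z - Ssum m A > 0" using z abs_Re_le_cmod[of z] by linarith
  ultimately show False using v(1) by (simp add: mult_le_0_iff)
qed

lemma inv_props:
  fixes M :: "complex^'n^'n"
  assumes "det M \<noteq> 0"
  shows "M ** matrix_inv M = mat 1" "matrix_inv M ** M = mat 1"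
proof -
  have "invertible M" using assms invertible_det_nz by blast
  then have "\<exists>A'. M ** A' = mat 1 \<and> A' ** M = mat 1" unfolding invertible_def by blast
  then have "M ** matrix_inv M = mat 1 \<and> matrix_inv M ** M = mat 1"
    unfolding matrix_inv_def by (rule someI_ex)
  then show "M ** matrix_inv M = mat 1" "matrix_inv M ** M = mat 1" by auto
qed

lemma inv_apply:
  fixes M :: "complex^'n^'n"
  assumes "det M \<noteq> 0"
  shows "M *v (matrix_inv M *v y) = y" "matrix_inv M *v (M *v y) = y"
  using inv_props[OF assms] by (simp_all add: matrix_vector_mul_assoc)

lemma sm_upper:
  assumes "\<forall>i\<le>m. tau i \<ge> 0" "Re z > Ssum m A"
  shows "det (charF m A tau z) \<noteq> 0" "sigma_max (matrix_inv (charF m A tau z)) \<le> 1 / (Re z - Ssum m A)"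
proof -
  show d: "det (charF m A tau z) \<noteq> 0" using root_bound[OF assms(1)] assms(2) by force
  have z0: "Re z \<ge> 0" using assms(2) Ssum_nonneg[of m A] by linarith
  have pos: "Re z - Ssum m A > 0" using assms(2) by simp
  show "sigma_max (matrix_inv (charF m A tau z)) \<le> 1 / (Re z - Ssum m A)"
    unfolding sigma_max_def
  proof (rule onorm_le)
    fix y
    define x where "x = matrix_inv (charF m A tau z) *v y"
    have "(cmod z - Ssum m A) * norm x \<le> norm y"
      using charF_lower[OF assms(1) z0, of A x] inv_apply(1)[OF d] by (simp add: x_def)
    moreover have "(Re z - Ssum m A) * norm x \<le> (cmod z - Ssum m A) * norm x"
      using complex_Re_le_cmod[of z] by (intro mult_right_mono) auto
    ultimately have "(Re z - Ssum m A) * norm x \<le> norm y" by linarith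
    then show "norm (matrix_inv (charF m A tau z) *v y) \<le> 1 / (Re z - Ssum m A) * norm y"
      using pos by (simp add: x_def field_simps)
  qed
qed

lemma w_lower:
  assumes "tau 0 = 0" "\<forall>i\<le>m. wt i > 0"
  shows "weightfun m tau wt z \<ge> 1 / wt 0"
proof -
  have "1 / wt 0 = cmod (exp (- z * complex_of_real (tau 0))) / wt 0" using assms by simp
  also have "\<dots> \<le> weightfun m tau wt z" unfolding weightfun_def
    by (rule member_le_sum[where f="\<lambda>k. cmod (exp (- z * complex_of_real (tau k))) / wt k"])
       (use assms in \<open>auto intro: divide_nonneg_pos less_imp_le\<close>)
  finally show ?thesis .
qed

lemma w_upper:
  assumes "\<forall>i\<le>m. tau i \<ge> 0" "\<forall>i\<le>m. wt i > 0" "Re z \<ge> 0"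
  shows "weightfun m tau wt z \<le> (\<Sum>k\<le>m. 1 / wt k)"
  unfolding weightfun_def
proof (intro sum_mono)
  fix k assume "k \<in> {..m}"
  then have "tau k \<ge> 0" "wt k > 0" using assms by auto
  then have "cmod (exp (- z * complex_of_real (tau k))) \<le> 1"
    using assms(3) by (simp add: mult_nonneg_nonneg)
  then show "cmod (exp (- z * complex_of_real (tau k))) / wt k \<le> 1 / wt k"
    using \<open>wt k > 0\<close> by (simp add: divide_right_mono)
qed

lemma exp_diff_bound:
  assumes "t \<ge> 0" "d \<ge> 0"
  shows "cmod (exp (- (z0 + complex_of_real d) * complex_of_real t) - exp (- z0 * complex_of_real t))
         \<le> t * exp (- Re z0 * t) * d"
proof -
  have "exp (- (z0 + complex_of_real d) * complex_of_real t) - exp (- z0 * complex_of_real t)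
      = exp (- z0 * complex_of_real t) * complex_of_real (exp (- d * t) - 1)"
  proof -
    have e1: "exp (- (z0 + complex_of_real d) * complex_of_real t) = exp (- z0 * complex_of_real t) * exp (- complex_of_real d * complex_of_real t)"
      by (subst exp_add[symmetric]) (simp add: algebra_simps)
    have e2: "exp (- complex_of_real d * complex_of_real t) = complex_of_real (exp (- d * t))"
      by (simp flip: exp_of_real)
    show ?thesis unfolding e1 e2 by (simp add: algebra_simps)
  qed
  then have "cmod (exp (- (z0 + complex_of_real d) * complex_of_real t) - exp (- z0 * complex_of_real t))
     = exp (- Re z0 * t) * \<bar>exp (- d * t) - 1\<bar>"
    by (simp only: norm_mult norm_of_real norm_exp_eq_Re) simp
  also have "\<bar>exp (- d * t) - 1\<bar> = 1 - exp (- d * t)"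
    using assms by (simp add: mult_nonneg_nonneg)
  also have "\<dots> \<le> d * t" using exp_ge_add_one_self[of "- d * t"] by simp
  finally show ?thesis
    by (simp add: mult_left_mono mult_ac)
qed

definition Lc :: "nat \<Rightarrow> (nat \<Rightarrow> complex^'n^'n) \<Rightarrow> (nat \<Rightarrow> real) \<Rightarrow> real \<Rightarrow> real" where
  "Lc m A tau r = 1 + (\<Sum>k\<le>m. tau k * exp (r * tau k) * l1 (A k))"

lemma sm_lower:
  assumes "\<forall>i\<le>m. tau i \<ge> 0" "det (charF m A tau z0) = 0" "d > 0"
    "det (charF m A tau (z0 + complex_of_real d)) \<noteq> 0"
  shows "1 \<le> sigma_max (matrix_inv (charF m A tau (z0 + complex_of_real d))) * (d * Lc m A tau (- Re z0))"
proof -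
  let ?z = "z0 + complex_of_real d"
  obtain v where v: "v \<noteq> 0" "charF m A tau z0 *v v = 0" using det0_ker assms(2) by blast
  let ?c = "\<lambda>k. exp (- ?z * complex_of_real (tau k)) - exp (- z0 * complex_of_real (tau k))"
  have eq: "charF m A tau ?z *v v = complex_of_real d *s v - (\<Sum>k\<le>m. ?c k *s (A k *v v))"
    using v(2) unfolding charF_mv
    by (simp add: vec_eq_iff sum_subtractf algebra_simps)
  have "norm (charF m A tau ?z *v v) \<le> d * norm v + (\<Sum>k\<le>m. cmod (?c k) * l1 (A k)) * norm v"
    unfolding eq using norm_triangle_ineq4[of "complex_of_real d *s v" "(\<Sum>k\<le>m. ?c k *s (A k *v v))"]
      Bsum_bound[where c="?c" and m=m and A=A and x=v] assms(3) by (simp add: norm_smult_vec)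
  also have "\<dots> \<le> d * norm v + (\<Sum>k\<le>m. tau k * exp (- Re z0 * tau k) * d * l1 (A k)) * norm v"
  proof (rule add_left_mono, rule mult_right_mono, rule sum_mono)
    fix k assume "k \<in> {..m}"
    then have "tau k \<ge> 0" using assms(1) by auto
    then show "cmod (?c k) * l1 (A k) \<le> tau k * exp (- Re z0 * tau k) * d * l1 (A k)"
      using exp_diff_bound[of "tau k" d z0] assms(3) by (intro mult_right_mono l1_nonneg) auto
  qed simp
  also have "\<dots> = d * Lc m A tau (- Re z0) * norm v"
    by (simp add: Lc_def algebra_simps sum_distrib_left sum_distrib_right)
  finally have Fv: "norm (charF m A tau ?z *v v) \<le> d * Lc m A tau (- Re z0) * norm v" .
  have "norm v = norm (matrix_inv (charF m A tau ?z) *v (charF m A tau ?z *v v))"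
    using inv_apply(2)[OF assms(4)] by simp
  also have "\<dots> \<le> sigma_max (matrix_inv (charF m A tau ?z)) * norm (charF m A tau ?z *v v)"
    by (rule sigma_max_le)
  also have "\<dots> \<le> sigma_max (matrix_inv (charF m A tau ?z)) * (d * Lc m A tau (- Re z0) * norm v)"
    by (intro mult_left_mono Fv sigma_max_nonneg)
  finally have "1 * norm v \<le> (sigma_max (matrix_inv (charF m A tau ?z)) * (d * Lc m A tau (- Re z0))) * norm v"
    by (simp add: mult_ac)
  then show ?thesis using v(1) by (simp only: mult_le_cancel_right) simp
qed



lemma charF_entry': "charF m A tau z $ i $ j = of_bool (i = j) * z - (\<Sum>k\<le>m. exp (- z * complex_of_real (tau k)) * A k $ i $ j)"
  by (simp add: charF_entry)

lemma det_charF_holo: "(\<lambda>z. det (charF m A tau z)) holomorphic_on UNIV"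
  unfolding det_def charF_entry' by (intro holomorphic_intros)

definition T0 :: "nat \<Rightarrow> (nat \<Rightarrow> real) \<Rightarrow> real" where
  "T0 m tau = 1 + (\<Sum>k\<le>m. tau k)"

lemma charF_entry_bound:
  assumes "\<forall>i\<le>m. tau i \<ge> 0"
  shows "cmod (charF m A tau z $ i $ j) \<le> (1 + Ssum m A) * exp (T0 m tau * cmod z)"
proof -
  have "0 \<le> sum tau {..m}" using assms by (intro sum_nonneg) auto
  then have T1: "T0 m tau \<ge> 1" unfolding T0_def by simp
  have E: "exp (cmod z) \<le> exp (T0 m tau * cmod z)"
    using T1 by (simp add: mult_right_mono[of 1 "T0 m tau" "cmod z", simplified])
  have a: "cmod (of_bool (i = j) * z) \<le> exp (T0 m tau * cmod z)"
  proof -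
    have "cmod (of_bool (i = j) * z) \<le> cmod z" by (simp add: norm_mult)
    also have "\<dots> \<le> exp (cmod z)" using exp_ge_add_one_self[of "cmod z"] by linarith
    finally show ?thesis using E by linarith
  qed
  have b: "cmod (\<Sum>k\<le>m. exp (- z * complex_of_real (tau k)) * A k $ i $ j) \<le> exp (T0 m tau * cmod z) * Ssum m A"
  proof -
    have "cmod (\<Sum>k\<le>m. exp (- z * complex_of_real (tau k)) * A k $ i $ j)
        \<le> (\<Sum>k\<le>m. cmod (exp (- z * complex_of_real (tau k)) * A k $ i $ j))" by (rule norm_sum)
    also have "\<dots> \<le> (\<Sum>k\<le>m. exp (T0 m tau * cmod z) * l1 (A k))"
    proof (rule sum_mono)
      fix k assume k: "k \<in> {..m}"
      then have tk: "tau k \<ge> 0" using assms by auto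
      have "tau k \<le> (\<Sum>k\<le>m. tau k)" using k assms by (intro member_le_sum) auto
      then have tT: "tau k \<le> T0 m tau" unfolding T0_def by linarith
      have "- Re z * tau k \<le> cmod z * tau k"
        using abs_Re_le_cmod[of z] tk by (intro mult_right_mono) auto
      also have "\<dots> \<le> T0 m tau * cmod z" using tT by (simp add: mult_left_mono mult.commute)
      finally have "cmod (exp (- z * complex_of_real (tau k))) \<le> exp (T0 m tau * cmod z)" by simp
      then show "cmod (exp (- z * complex_of_real (tau k)) * A k $ i $ j) \<le> exp (T0 m tau * cmod z) * l1 (A k)"
        unfolding norm_mult by (intro mult_mono entry_le_l1) auto
    qed
    also have "\<dots> = exp (T0 m tau * cmod z) * Ssum m A" by (simp add: Ssum_def sum_distrib_left)
    finally show ?thesis .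
  qed
  show ?thesis unfolding charF_entry'
    using norm_triangle_ineq4[of "of_bool (i = j) * z" "(\<Sum>k\<le>m. exp (- z * complex_of_real (tau k)) * A k $ i $ j)"] a b
    by (simp add: algebra_simps)
qed

lemma det_charF_growth:
  fixes A :: "nat \<Rightarrow> complex^'n::finite^'n"
  assumes "\<forall>i\<le>m. tau i \<ge> 0"
  shows "cmod (det (charF m A tau (z::complex)) :: complex) \<le> fact CARD('n) * (1 + Ssum m A) ^ CARD('n) * exp (CARD('n) * T0 m tau * cmod z)"
proof -
  let ?M = "charF m A tau z :: complex^'n^'n"
  let ?E = "(1 + Ssum m A) * exp (T0 m tau * cmod z)"
  have "cmod (det ?M) \<le> (\<Sum>p\<in>{p. p permutes (UNIV::'n set)}. cmod (of_int (sign p) * (\<Prod>i\<in>UNIV. ?M$i$p i)))"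
    unfolding det_def by (rule norm_sum)
  also have "\<dots> \<le> (\<Sum>p\<in>{p. p permutes (UNIV::'n set)}. ?E ^ CARD('n))"
  proof (rule sum_mono)
    fix p :: "'n \<Rightarrow> 'n"
    have "cmod (of_int (sign p) * (\<Prod>i\<in>UNIV. ?M$i$p i)) = (\<Prod>i\<in>UNIV. cmod (?M$i$p i))"
      by (simp add: norm_mult prod_norm sign_def)
    also have "\<dots> \<le> (\<Prod>i\<in>(UNIV::'n set). ?E)"
      by (intro prod_mono conjI norm_ge_zero charF_entry_bound assms)
    finally show "cmod (of_int (sign p) * (\<Prod>i\<in>UNIV. ?M$i$p i)) \<le> ?E ^ CARD('n)" by simp
  qed
  also have "\<dots> = fact CARD('n) * ?E ^ CARD('n)"
    by (simp add: card_permutations)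
  also have "\<dots> = fact CARD('n) * (1 + Ssum m A) ^ CARD('n) * exp (CARD('n) * T0 m tau * cmod z)"
    by (simp add: power_mult_distrib mult.assoc flip: exp_of_nat_mult)
  finally show ?thesis .
qed

lemma entry_limit:
  fixes A :: "nat \<Rightarrow> complex^'n::finite^'n"
  assumes "\<forall>i\<le>m. tau i \<ge> 0"
  shows "((\<lambda>x::real. of_bool (i = j) - (\<Sum>k\<le>m. exp (- complex_of_real x * complex_of_real (tau k)) * A k $ i $ j) / complex_of_real x)
     \<longlongrightarrow> of_bool (i = j)) at_top"
proof -
  have "((\<lambda>x::real. (\<Sum>k\<le>m. exp (- complex_of_real x * complex_of_real (tau k)) * A k $ i $ j) / complex_of_real x) \<longlongrightarrow> 0) at_top"
  proof (rule Lim_null_comparison)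
    show "\<forall>\<^sub>F x in at_top. norm ((\<Sum>k\<le>m. exp (- complex_of_real x * complex_of_real (tau k)) * A k $ i $ j) / complex_of_real x) \<le> Ssum m A / x"
      using eventually_gt_at_top[of 0]
    proof eventually_elim
      case (elim x)
      have "cmod (\<Sum>k\<le>m. exp (- complex_of_real x * complex_of_real (tau k)) * A k $ i $ j)
         \<le> (\<Sum>k\<le>m. cmod (exp (- complex_of_real x * complex_of_real (tau k)) * A k $ i $ j))" by (rule norm_sum)
      also have "\<dots> \<le> (\<Sum>k\<le>m. l1 (A k))"
      proof (rule sum_mono)
        fix k assume "k \<in> {..m}"
        then have "tau k \<ge> 0" using assms by auto
        then have e1: "cmod (exp (- complex_of_real x * complex_of_real (tau k))) \<le> 1"
          using elim by (simp add: mult_nonneg_nonneg)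
        show "cmod (exp (- complex_of_real x * complex_of_real (tau k)) * A k $ i $ j) \<le> l1 (A k)"
          using mult_mono[OF e1 entry_le_l1[of "A k" i j]] by (simp add: norm_mult)
      qed
      finally show ?case using elim by (simp add: norm_divide Ssum_def divide_right_mono)
    qed
    show "((\<lambda>x. Ssum m A / x) \<longlongrightarrow> 0) at_top"
      by (intro tendsto_divide_0[OF tendsto_const] filterlim_at_top_imp_at_infinity filterlim_ident)
  qed
  from tendsto_diff[OF tendsto_const[of "of_bool (i = j) :: complex"] this] show ?thesis by simp
qed

lemma det_charF_asym:
  fixes A :: "nat \<Rightarrow> complex^'n::finite^'n"
  assumes "\<forall>i\<le>m. tau i \<ge> 0"
  shows "((\<lambda>x::real. det (charF m A tau (complex_of_real x)) / complex_of_real x ^ CARD('n)) \<longlongrightarrow> 1) at_top"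
proof -
  let ?q = "\<lambda>x::real. \<lambda>i j. of_bool (i = j) - (\<Sum>k\<le>m. exp (- complex_of_real x * complex_of_real (tau k)) * A k $ i $ j) / complex_of_real x"
  let ?P = "{p. p permutes (UNIV::'n set)}"
  have lim: "((\<lambda>x. \<Sum>p\<in>?P. of_int (sign p) * (\<Prod>i\<in>UNIV. ?q x i (p i))) \<longlongrightarrow>
        (\<Sum>p\<in>?P. of_int (sign p) * (\<Prod>i\<in>UNIV. (of_bool (i = p i) :: complex)))) at_top"
    by (intro tendsto_intros entry_limit assms)
  have one: "(\<Sum>p\<in>?P. of_int (sign p) * (\<Prod>i\<in>UNIV. (of_bool (i = p i) :: complex))) = 1"
    using det_I[where 'a=complex and 'n='n] unfolding det_def by (simp add: mat_def of_bool_def)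
  have ev: "\<forall>\<^sub>F x in at_top. (\<Sum>p\<in>?P. of_int (sign p) * (\<Prod>i\<in>UNIV. ?q x i (p i)))
        = det (charF m A tau (complex_of_real x)) / complex_of_real x ^ CARD('n)"
    using eventually_gt_at_top[of 0]
  proof eventually_elim
    case (elim x)
    then have x0: "complex_of_real x \<noteq> 0" by simp
    have ent: "charF m A tau (complex_of_real x) $ i $ j = complex_of_real x * ?q x i j" for i j
      unfolding charF_entry' using x0 by (simp add: field_simps)
    have "det (charF m A tau (complex_of_real x)) = (\<Sum>p\<in>?P. of_int (sign p) * (\<Prod>i\<in>UNIV. complex_of_real x * ?q x i (p i)))"
      unfolding det_def ent ..
    also have "\<dots> = complex_of_real x ^ CARD('n) * (\<Sum>p\<in>?P. of_int (sign p) * (\<Prod>i\<in>UNIV. ?q x i (p i)))"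
      by (simp add: prod.distrib sum_distrib_left mult_ac)
    finally show ?case using x0 by simp
  qed
  show ?thesis using Lim_transform_eventually[OF lim[unfolded one] ev] .
qed



lemma half_plane_disk:
  fixes X :: complex and M :: real
  assumes "Re X < M" "M > 0"
  shows "cmod X < cmod (complex_of_real (2*M) - X)"
proof -
  have "(cmod X)^2 = Re X ^ 2 + Im X ^ 2" by (simp add: cmod_power2)
  also have "\<dots> < (2*M - Re X)^2 + Im X ^ 2"
    using assms by (simp add: power2_eq_square algebra_simps)
  also have "\<dots> = (cmod (complex_of_real (2*M) - X))^2" by (simp add: cmod_power2)
  finally show ?thesis by (rule power_less_imp_less_base) simp
qed

lemma BC_bound:
  assumes holo: "h holomorphic_on UNIV" and C: "C \<ge> 0"
    and re: "\<And>z. Re (h z) \<le> C * cmod z + C"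
  shows "cmod (h z - h 0) \<le> 2 * (C * (2 * cmod z + 1) + C + cmod (h 0) + 1)"
proof -
  define R where "R = 2 * cmod z + 1"
  define M where "M = C * R + C + cmod (h 0) + 1"
  have R: "R > 0" unfolding R_def by (simp add: add_nonneg_pos)
  have M: "M > 0" unfolding M_def using C R by (simp add: add_nonneg_pos)
  define X where "X = (\<lambda>w. h (complex_of_real R * w) - h 0)"
  have reX: "Re (X w) < M" if "cmod w < 1" for w
  proof -
    have "Re (X w) \<le> C * cmod (complex_of_real R * w) + C + cmod (h 0)"
      unfolding X_def using re[of "complex_of_real R * w"] abs_Re_le_cmod[of "h 0"] by simp
    also have "cmod (complex_of_real R * w) \<le> R"
      using that R by (simp add: norm_mult mult_left_le)
    then have "C * cmod (complex_of_real R * w) \<le> C * R" using C by (simp add: mult_left_mono)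
    finally show ?thesis unfolding M_def by linarith
  qed
  define psi where "psi = (\<lambda>w. X w / (complex_of_real (2*M) - X w))"
  have den: "complex_of_real (2*M) - X w \<noteq> 0" if "cmod w < 1" for w
    proof
    assume "complex_of_real (2*M) - X w = 0"
    then have "Re (complex_of_real (2*M) - X w) = 0" by simp
    then show False using reX[OF that] M by simp
  qed
  have psi_holo: "psi holomorphic_on ball 0 1"
  proof -
    have "(h \<circ> (\<lambda>w. complex_of_real R * w)) holomorphic_on UNIV"
      by (rule holomorphic_on_compose) (auto intro: holomorphic_intros holomorphic_on_subset[OF holo])
    then have "X holomorphic_on UNIV" unfolding X_def o_def by (intro holomorphic_intros)
    then have "X holomorphic_on ball 0 1" by (rule holomorphic_on_subset) auto
    then show ?thesis unfolding psi_def using den by (intro holomorphic_intros) auto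
  qed
  have psi0: "psi 0 = 0" by (simp add: psi_def X_def)
  have psi_lt: "cmod (psi w) < 1" if "cmod w < 1" for w
    unfolding psi_def using half_plane_disk[OF reX[OF that] M] den[OF that]
    by (simp add: norm_divide divide_less_eq)
  define w0 where "w0 = z / complex_of_real R"
  have w0: "cmod w0 < 1/2"
  proof -
    have "cmod w0 = cmod z / R" unfolding w0_def using R by (simp add: norm_divide)
    then show ?thesis unfolding R_def by (simp add: divide_less_eq, insert norm_ge_zero[of z], linarith)
  qed
  have Xw0: "X w0 = h z - h 0" unfolding X_def w0_def using R by simp
  have sch: "cmod (psi w0) \<le> cmod w0"
    by (rule Schwarz_Lemma(1)[OF psi_holo psi0 psi_lt]) (use w0 in auto)
  have eq: "X w0 * (1 + psi w0) = complex_of_real (2*M) * psi w0"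
    using den[of w0] w0 unfolding psi_def by (simp add: field_simps)
  have "cmod (X w0) * (1/2) \<le> cmod (X w0) * cmod (1 + psi w0)"
  proof (rule mult_left_mono)
    have "1 - cmod (psi w0) \<le> cmod (1 + psi w0)"
      using norm_triangle_ineq2[of 1 "- psi w0"] by simp
    then show "1/2 \<le> cmod (1 + psi w0)" using sch w0 by linarith
  qed simp
  also have "\<dots> = 2 * M * cmod (psi w0)" using eq M
    by (metis norm_mult norm_of_real abs_of_pos mult_pos_pos zero_less_numeral)
  also have "\<dots> \<le> 2 * M * (1/2)" using sch w0 M by simp
  finally have "cmod (X w0) \<le> 2 * M" by simp
  then show ?thesis unfolding Xw0 M_def R_def .
qed

lemma affine_entire:
  assumes holo: "h holomorphic_on UNIV" and C: "C \<ge> 0"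
    and re: "\<And>z. Re (h z) \<le> C * cmod z + C"
  shows "h z = h 0 + deriv h 0 * z"
proof -
  define K where "K = 2 * (C * 3 + C + cmod (h 0) + 1) + cmod (h 0)"
  have "cmod (h w) \<le> K * cmod w ^ 1" if "1 \<le> cmod w" for w
  proof -
    have "cmod (h w) \<le> cmod (h w - h 0) + cmod (h 0)" by (metis norm_triangle_sub add.commute)
    also have "\<dots> \<le> 2 * (C * (2 * cmod w + 1) + C + cmod (h 0) + 1) + cmod (h 0)"
      using BC_bound[OF holo C re, of w] by simp
    also have "\<dots> \<le> K * cmod w"
      
    proof -
      have "C \<le> C * cmod w" using that C by (simp add: mult_le_cancel_left1)
      moreover have "cmod (h 0) \<le> cmod (h 0) * cmod w" using that by (simp add: mult_le_cancel_left1)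
      ultimately show ?thesis using that by (simp add: K_def algebra_simps)
    qed
    finally show ?thesis by simp
  qed
  from Liouville_polynomial[OF holo this, where \<xi>=z] show ?thesis by (simp add: numeral_2_eq_2)
qed



lemma roots_exist:
  fixes A :: "nat \<Rightarrow> complex^'n::finite^'n"
  assumes taus: "\<forall>i\<le>m. tau i \<ge> 0"
  shows "\<exists>z. det (charF m A tau z) = 0"
proof (rule ccontr)
  assume "\<not> ?thesis"
  then have nz: "\<And>z. det (charF m A tau z) \<noteq> 0" by auto
  define g where "g = (\<lambda>z. det (charF m A tau z))"
  obtain h where h: "h holomorphic_on UNIV" "\<And>x. exp (h x) = g x"
    using holomorphic_logarithm_exists[of UNIV g 0] det_charF_holo[of m A tau] nz unfolding g_def by auto
  define D where "D = fact CARD('n) * (1 + Ssum m A) ^ CARD('n)"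
  have D: "D > 0" unfolding D_def using Ssum_nonneg[of m A] by (simp add: add_pos_nonneg)
  define T where "T = CARD('n) * T0 m tau"
  have "0 \<le> sum tau {..m}" using taus by (intro sum_nonneg) auto
  then have T: "T \<ge> 0" unfolding T_def T0_def by simp
  have re: "Re (h z) \<le> (T + \<bar>ln D\<bar>) * cmod z + (T + \<bar>ln D\<bar>)" for z
  proof -
    have "exp (Re (h z)) = cmod (g z)" using h(2)[of z] by (metis norm_exp_eq_Re)
    also have "\<dots> \<le> D * exp (T * cmod z)" unfolding g_def D_def T_def
      using det_charF_growth[OF taus, of A z] by simp
    also have "\<dots> = exp (ln D + T * cmod z)" using D by (simp add: exp_add)
    finally have "Re (h z) \<le> ln D + T * cmod z" by simp
    moreover have "T * cmod z \<le> (T + \<bar>ln D\<bar>) * cmod z" by (intro mult_right_mono) auto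
    ultimately show ?thesis using T by linarith
  qed
  have aff: "h z = h 0 + deriv h 0 * z" for z
    by (rule affine_entire[OF h(1) _ re]) (use T in auto)
  define a where "a = deriv h 0"
  have gform: "g z = exp (h 0) * exp (a * z)" for z
    using h(2)[of z] aff[of z] by (simp add: a_def exp_add)
  let ?n = "CARD('n)"
  define q where "q = (\<lambda>x::real. g (complex_of_real x) / complex_of_real x ^ ?n)"
  have qlim: "(q \<longlongrightarrow> 1) at_top" unfolding q_def g_def by (rule det_charF_asym[OF taus])
  have key: "((\<lambda>x. exp (a * (complex_of_real c - 1) * complex_of_real x)) \<longlongrightarrow> complex_of_real c ^ ?n) at_top"
    if c: "c > 1" for c :: real
  proof -
    have fl: "filterlim (\<lambda>x::real. c * x) at_top at_top"
      using c by (intro filterlim_tendsto_pos_mult_at_top[OF tendsto_const _ filterlim_ident]) auto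
    have l1: "((\<lambda>x. q (c * x) / q x * complex_of_real c ^ ?n) \<longlongrightarrow> 1 / 1 * complex_of_real c ^ ?n) at_top"
      by (intro tendsto_intros filterlim_compose[OF qlim fl] qlim) simp
    have ev: "\<forall>\<^sub>F x in at_top. q (c * x) / q x * complex_of_real c ^ ?n = exp (a * (complex_of_real c - 1) * complex_of_real x)"
      using eventually_gt_at_top[of 0]
    proof eventually_elim
      case (elim x)
      have x0: "complex_of_real x \<noteq> 0" "complex_of_real c \<noteq> 0" using elim c by auto
      have "exp (a * complex_of_real (c * x)) = exp (a * (complex_of_real c - 1) * complex_of_real x) * exp (a * complex_of_real x)"
        by (subst exp_add[symmetric]) (simp add: algebra_simps)
      then show ?case unfolding q_def gform using x0
        by (simp add: field_simps power_mult_distrib)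
    qed
    show ?thesis using Lim_transform_eventually[OF l1 ev] by simp
  qed
  have k2: "((\<lambda>x. exp (a * complex_of_real x)) \<longlongrightarrow> 2 ^ ?n) at_top"
    using key[of 2] by simp
  have k3: "((\<lambda>x. exp (a * complex_of_real x) ^ 2) \<longlongrightarrow> 3 ^ ?n) at_top"
    using key[of 3] by (simp add: exp_double[symmetric] algebra_simps power2_eq_square flip: exp_add)
  have k4: "((\<lambda>x. exp (a * complex_of_real x) ^ 2) \<longlongrightarrow> (2 ^ ?n) ^ 2) at_top"
    by (intro tendsto_intros k2)
  have eA: "(3::complex) ^ ?n = (2 ^ ?n) ^ 2" using tendsto_unique[OF _ k3 k4] by simp
  have eB: "((2::complex) ^ ?n) ^ 2 = (2 ^ 2) ^ ?n" by (simp only: power_mult[symmetric] mult.commute)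
  have e2: "(2::complex) ^ 2 = 4" by simp
  have "(3::complex) ^ ?n = 4 ^ ?n" using trans[OF eA eB] unfolding e2 .
  then have "complex_of_real (3 ^ ?n) = complex_of_real (4 ^ ?n)" by simp
  then have "(3::real) ^ ?n = 4 ^ ?n" by (simp only: of_real_eq_iff)
  moreover have "(3::real) ^ ?n < 4 ^ ?n" by (intro power_strict_mono) auto
  ultimately show False by simp
qed



lemma Lc_mono:
  assumes "\<forall>i\<le>m. tau i \<ge> 0" "r \<le> s"
  shows "Lc m A tau r \<le> Lc m A tau s"
  unfolding Lc_def
proof (intro add_left_mono sum_mono)
  fix k assume "k \<in> {..m}"
  then have t: "tau k \<ge> 0" using assms by auto
  have "exp (r * tau k) \<le> exp (s * tau k)" using t assms(2) by (simp add: mult_right_mono)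
  then show "tau k * exp (r * tau k) * l1 (A k) \<le> tau k * exp (s * tau k) * l1 (A k)"
    using t by (intro mult_right_mono mult_left_mono l1_nonneg) auto
qed

lemma Lc_pos:
  assumes "\<forall>i\<le>m. tau i \<ge> 0"
  shows "Lc m A tau r \<ge> 1"
  unfolding Lc_def using assms by (auto intro!: sum_nonneg mult_nonneg_nonneg l1_nonneg)

theorem proposition2:
  fixes m :: nat and A :: "nat \<Rightarrow> complex^'n^'n" and tau wt :: "nat \<Rightarrow> real"
  assumes "tau 0 = 0"
    and "\<forall>i\<le>m. tau i \<ge> 0"
    and "\<forall>i\<le>m. wt i > 0"
  shows "(alpha_f m A tau wt \<longlongrightarrow> \<infinity>) (at_right (spectral_abscissa m A tau))
       \<and> (alpha_f m A tau wt \<longlongrightarrow> 0) at_top"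
proof
  note taus = assms(2) and wts = assms(3)
  define Z where "Z = {lam. det (charF m A tau lam) = 0}"
  define a0 where "a0 = spectral_abscissa m A tau"
  have a0: "a0 = Sup (Re ` Z)" unfolding a0_def spectral_abscissa_def Z_def ..
  have Zne: "Re ` Z \<noteq> {}" using roots_exist[OF taus, of A] unfolding Z_def by auto
  have Zbdd: "bdd_above (Re ` Z)" unfolding Z_def using root_bound[OF taus]
    by (auto intro!: bdd_aboveI[where M="Ssum m A"])
  have upper: "Re z \<le> a0" if "det (charF m A tau z) = 0" for z
    unfolding a0 using that Zbdd by (intro cSup_upper) (auto simp: Z_def)
  have w0: "wt 0 > 0" using wts by auto
  define L where "L = Lc m A tau (1 - a0)"
  have L: "L \<ge> 1" unfolding L_def by (rule Lc_pos[OF taus])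
  have fnn: "ffun m A tau wt z \<ge> 0" for z
    unfolding ffun_def using w_lower[where tau=tau and wt=wt and m=m, OF assms(1) wts, of z] w0 sigma_max_nonneg
    by (intro mult_nonneg_nonneg) (auto intro: order.trans[rotated] simp: less_imp_le)
  have lowb: "alpha_f m A tau wt s \<ge> ereal (1 / (wt 0 * L * (2 * (s - a0))))" if s: "s > a0" for s
  proof -
    define e where "e = min 1 (s - a0)"
    have e: "e > 0" "e \<le> 1" "e \<le> s - a0" using s by (auto simp: e_def)
    have "a0 - e < Sup (Re ` Z)" using e unfolding a0 by simp
    then obtain r where r: "r \<in> Re ` Z" "a0 - e < r" using less_cSupE[OF _ Zne] by blast
    then obtain z0 where z0: "det (charF m A tau z0) = 0" "a0 - e < Re z0" unfolding Z_def by auto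
    have z0u: "Re z0 \<le> a0" using upper[OF z0(1)] .
    define d where "d = s - Re z0"
    have d: "d > 0" "d \<le> 2 * (s - a0)" using z0u z0(2) e s by (auto simp: d_def)
    have zeq: "z0 + complex_of_real d = Complex s (Im z0)" by (simp add: complex_eq_iff d_def)
    have dnz: "det (charF m A tau (z0 + complex_of_real d)) \<noteq> 0"
    proof
      assume "det (charF m A tau (z0 + complex_of_real d)) = 0"
      from upper[OF this] show False using s by (simp add: zeq)
    qed
    let ?sm = "sigma_max (matrix_inv (charF m A tau (Complex s (Im z0))))"
    have "1 \<le> ?sm * (d * Lc m A tau (- Re z0))"
      using sm_lower[OF taus z0(1) d(1) dnz] by (simp add: zeq)
    also have "\<dots> \<le> ?sm * (2 * (s - a0) * L)"
    proof (intro mult_left_mono mult_mono sigma_max_nonneg)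
      show "Lc m A tau (- Re z0) \<le> L" unfolding L_def using z0(2) e by (intro Lc_mono[OF taus]) auto
    qed (use d Lc_pos[OF taus, of A "- Re z0"] in auto)
    finally have sm1: "1 \<le> ?sm * (2 * (s - a0) * L)" .
    have pos: "0 < 2 * (s - a0) * L" using s L by simp
    have smb: "1 / (2 * (s - a0) * L) \<le> ?sm" using sm1 pos by (simp add: divide_le_eq)
    have "1 / (wt 0 * L * (2 * (s - a0))) = (1 / wt 0) * (1 / (2 * (s - a0) * L))" by (simp add: mult_ac)
    also have "\<dots> \<le> weightfun m tau wt (Complex s (Im z0)) * ?sm"
    proof -
      have wl: "1 / wt 0 \<le> weightfun m tau wt (Complex s (Im z0))"
        by (rule w_lower[where tau=tau and wt=wt and m=m, OF assms(1) wts])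
      have "0 < 1 / wt 0" using w0 by simp
      then have wnn: "0 \<le> weightfun m tau wt (Complex s (Im z0))" using wl by linarith
      show ?thesis using wl smb pos wnn by (intro mult_mono) auto
    qed
    also have "\<dots> = ffun m A tau wt (Complex s (Im z0))" by (simp add: ffun_def)
    finally have "ereal (1 / (wt 0 * L * (2 * (s - a0)))) \<le> ereal (ffun m A tau wt (Complex s (Im z0)))" by simp
    also have "\<dots> \<le> alpha_f m A tau wt s" unfolding alpha_f_def by (rule SUP_upper) simp
    finally show ?thesis .
  qed
  show "(alpha_f m A tau wt \<longlongrightarrow> \<infinity>) (at_right (spectral_abscissa m A tau))"
    unfolding a0_def[symmetric] tendsto_PInfty
  proof
    fix r :: real
    define b where "b = a0 + 1 / (2 * wt 0 * L * (\<bar>r\<bar> + 1))"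
    have bpos: "0 < 2 * wt 0 * L * (\<bar>r\<bar> + 1)" using w0 L by (simp add: add_nonneg_pos)
    have "b > a0" unfolding b_def using bpos by simp
    moreover have "ereal r < alpha_f m A tau wt y" if "a0 < y" "y < b" for y
    proof -
      have p2: "0 < wt 0 * L * (2 * (y - a0))" using that w0 L by simp
      have "wt 0 * L * (2 * (y - a0)) < wt 0 * L * (2 * (1 / (2 * wt 0 * L * (\<bar>r\<bar> + 1))))"
        using that w0 L unfolding b_def by (intro mult_strict_left_mono) auto
      also have "\<dots> = 1 / (\<bar>r\<bar> + 1)"
      proof -
        have nz: "wt 0 \<noteq> 0" "L \<noteq> 0" "\<bar>r\<bar> + 1 \<noteq> 0" using w0 L by auto
        then show ?thesis by (simp add: divide_simps)
      qed
      finally have "wt 0 * L * (2 * (y - a0)) < 1 / (\<bar>r\<bar> + 1)" .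
      then have "(\<bar>r\<bar> + 1) < 1 / (wt 0 * L * (2 * (y - a0)))"
        using p2 by (simp add: field_simps)
      then have "ereal r < ereal (1 / (wt 0 * L * (2 * (y - a0))))" by simp
      also have "\<dots> \<le> alpha_f m A tau wt y" using lowb that by simp
      finally show ?thesis .
    qed
    ultimately show "\<forall>\<^sub>F x in at_right a0. ereal r < alpha_f m A tau wt x"
      unfolding eventually_at_right_field by blast
  qed
  define S where "S = Ssum m A"
  define W where "W = (\<Sum>k\<le>m. 1 / wt k)"
  have S: "S \<ge> 0" unfolding S_def by (rule Ssum_nonneg)
  have ub: "alpha_f m A tau wt s \<le> ereal (W / (s - S))" if s: "s > S" for s
    unfolding alpha_f_def
  proof (rule SUP_least)
    fix w :: real
    let ?z = "Complex s w"
    have rez: "Re ?z > Ssum m A" "Re ?z \<ge> 0" using s S by (auto simp: S_def)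
    have "ffun m A tau wt ?z \<le> W * (1 / (s - S))"
      unfolding ffun_def W_def
      using w_upper[OF taus wts rez(2)] sm_upper(2)[OF taus rez(1)] sigma_max_nonneg
        w_lower[where tau=tau and wt=wt and m=m, OF assms(1) wts, of ?z] w0
      by (intro mult_mono) (auto simp: S_def intro: order.trans[rotated] less_imp_le)
    then show "ereal (ffun m A tau wt ?z) \<le> ereal (W / (s - S))" by simp
  qed
  have lb: "alpha_f m A tau wt s \<ge> 0" for s
  proof -
    have "(0::ereal) \<le> ereal (ffun m A tau wt (Complex s 0))" using fnn by simp
    also have "\<dots> \<le> alpha_f m A tau wt s" unfolding alpha_f_def by (rule SUP_upper) simp
    finally show ?thesis .
  qed
  have lim0: "((\<lambda>s. W / (s - S)) \<longlongrightarrow> 0) at_top"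
  proof -
    have "filterlim (\<lambda>s::real. - S + s) at_top at_top"
      by (rule filterlim_tendsto_add_at_top[OF tendsto_const filterlim_ident])
    then have "filterlim (\<lambda>s::real. s - S) at_infinity at_top"
      by (intro filterlim_at_top_imp_at_infinity) simp
    then show ?thesis by (rule tendsto_divide_0[OF tendsto_const])
  qed
  have lim0': "((\<lambda>s. ereal (W / (s - S))) \<longlongrightarrow> 0) at_top"
    using tendsto_ereal[OF lim0] by (simp add: zero_ereal_def)
  show "(alpha_f m A tau wt \<longlongrightarrow> 0) at_top"
  proof (rule tendsto_sandwich[OF _ _ tendsto_const lim0'])
    show "\<forall>\<^sub>F s in at_top. 0 \<le> alpha_f m A tau wt s" using lb by simp
    show "\<forall>\<^sub>F s in at_top. alpha_f m A tau wt s \<le> ereal (W / (s - S))"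
      using eventually_gt_at_top[of S] by eventually_elim (rule ub)
  qed
qed

end
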